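(* Let $\rho\in(0,1]$, let $M$ be a finite set, and let $(S_i)_{i\in I}$ be a nonempty family (with $I$ finite) of subsets of $M$ such that $|S_i|\geq\rho|M|$ for all $i\in I$. Set $k(\rho):=\lceil\rho^{-1}\rceil+1$ and $t(\rho):=\rho/\Delta_{\lceil\rho^{-1}\rceil}$, where $\Delta_n:=\frac12 n(n+1)$. Then: (1) If $J\subseteq I$ with $|J|\geq k(\rho)$, then there exist distinct $i,j\in J$ with $|S_i\cap S_j|\geq t(\rho)|M|$. (2) There exists $i\in I$ such that for at least $\frac{|I|-(k(\rho)-1)}{k(\rho)-1}$ many $j\in I\setminus\{i\}$ we have $|S_i\cap S_j|\geq t(\rho)|M|$. (3) If $|I|\geq 2(k(\rho)-1)$, then there exists $i\in I$ such that for at least $\frac{|I|}{2(k(\rho)-1)}$ many $j\in I\setminus\{i\}$ we have $|S_i\cap S_j|\geq t(\rho)|M|$. *)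

theory Defs
  imports Complex_Main
begin

definition Delta :: "nat \<Rightarrow> real" where
  "Delta n = real n * (real n + 1) / 2"

definition k_rho :: "real \<Rightarrow> nat" where
  "k_rho \<rho> = nat \<lceil>1 / \<rho>\<rceil> + 1"

definition t_rho :: "real \<Rightarrow> real" where
  "t_rho \<rho> = \<rho> / Delta (nat \<lceil>1 / \<rho>\<rceil>)"

end

theory Submission
  imports Defs
begin

lemma bonf:
  assumes "finite A" "\<forall>i\<in>A. finite (S i)"
  shows "(\<Sum>i\<in>A. real (card (S i))) \<le> real (card (\<Union>i\<in>A. S i))
           + (\<Sum>i\<in>A. \<Sum>j\<in>A-{i}. real (card (S i \<inter> S j))) / 2"
  using assms
proof (induction A rule: finite_induct)
  case empty
  show ?case by simp
next
  case (insert a A)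
  let ?f = "\<lambda>i j. real (card (S i \<inter> S j))"
  let ?U = "\<Union>i\<in>A. S i"
  have finU: "finite ?U" using insert by auto
  have fa: "finite (S a)" using insert by auto
  have IH: "(\<Sum>i\<in>A. real (card (S i))) \<le> real (card ?U) + (\<Sum>i\<in>A. \<Sum>j\<in>A-{i}. ?f i j) / 2"
    using insert by auto
  have cu: "real (card (S a \<union> ?U)) = real (card (S a)) + real (card ?U) - real (card (S a \<inter> ?U))"
    using card_Un_Int[OF fa finU] by simp
  have ci: "real (card (S a \<inter> ?U)) \<le> (\<Sum>j\<in>A. ?f a j)"
  proof -
    have "S a \<inter> ?U = (\<Union>j\<in>A. S a \<inter> S j)" by blast
    moreover have "card (\<Union>j\<in>A. S a \<inter> S j) \<le> (\<Sum>j\<in>A. card (S a \<inter> S j))" using card_UN_le[OF insert(1)] by blast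
    ultimately have "card (S a \<inter> ?U) \<le> (\<Sum>j\<in>A. card (S a \<inter> S j))" by simp
    hence "real (card (S a \<inter> ?U)) \<le> real (\<Sum>j\<in>A. card (S a \<inter> S j))" by linarith
    thus ?thesis by simp
  qed
  have ds: "(\<Sum>i\<in>insert a A. \<Sum>j\<in>insert a A-{i}. ?f i j)
      = (\<Sum>j\<in>A. ?f a j) + ((\<Sum>i\<in>A. ?f i a) + (\<Sum>i\<in>A. \<Sum>j\<in>A-{i}. ?f i j))"
  proof -
    have "(\<Sum>i\<in>insert a A. \<Sum>j\<in>insert a A-{i}. ?f i j)
        = (\<Sum>j\<in>insert a A-{a}. ?f a j) + (\<Sum>i\<in>A. \<Sum>j\<in>insert a A-{i}. ?f i j)"
      using insert by (simp add: sum.insert)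
    also have "insert a A - {a} = A" using insert by auto
    also have "(\<Sum>i\<in>A. \<Sum>j\<in>insert a A-{i}. ?f i j) = (\<Sum>i\<in>A. ?f i a + (\<Sum>j\<in>A-{i}. ?f i j))"
    proof (rule sum.cong[OF refl])
      fix i assume "i \<in> A"
      then have "insert a A - {i} = insert a (A-{i})" "a \<notin> A-{i}" using insert by auto
      then show "(\<Sum>j\<in>insert a A-{i}. ?f i j) = ?f i a + (\<Sum>j\<in>A-{i}. ?f i j)" using insert by simp
    qed
    finally show ?thesis by (simp add: sum.distrib)
  qed
  have sym: "(\<Sum>i\<in>A. ?f i a) = (\<Sum>j\<in>A. ?f a j)" by (simp add: Int_commute)
  have un: "(\<Union>i\<in>insert a A. S i) = S a \<union> ?U" by simp
  have ls: "(\<Sum>i\<in>insert a A. real (card (S i))) = real (card (S a)) + (\<Sum>i\<in>A. real (card (S i)))"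
    using insert by simp
  define X where "X = (\<Sum>j\<in>A. ?f a j)"
  define Y where "Y = (\<Sum>i\<in>A. \<Sum>j\<in>A-{i}. ?f i j)"
  define Z where "Z = (\<Sum>i\<in>A. real (card (S i)))"
  have ds2: "(\<Sum>i\<in>insert a A. \<Sum>j\<in>insert a A-{i}. ?f i j) = 2 * X + Y"
    using ds sym unfolding X_def Y_def by simp
  have "Z \<le> real (card ?U) + Y / 2" using IH unfolding Y_def Z_def .
  moreover have "real (card (S a \<inter> ?U)) \<le> X" using ci unfolding X_def .
  ultimately have h: "real (card (S a)) + Z \<le> real (card (S a \<union> ?U)) + (X + Y / 2)"
    using cu by linarith
  have e: "(2 * X + Y) / 2 = X + Y / 2" by simp
  show ?case unfolding ls un ds2 Z_def[symmetric] e using h .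
qed

lemma greedy:
  fixes R :: "'b \<Rightarrow> 'b \<Rightarrow> bool" and D :: nat
  assumes "finite I" "\<forall>i j. R i j \<longrightarrow> R j i" "\<forall>i\<in>I. card {j\<in>I-{i}. R i j} \<le> D"
  shows "\<exists>J\<subseteq>I. (\<forall>i\<in>J. \<forall>j\<in>J. i \<noteq> j \<longrightarrow> \<not> R i j) \<and> card I \<le> card J * (D+1)"
  using assms(1,3)
proof (induction I rule: finite_psubset_induct)
  case (psubset I)
  show ?case
  proof (cases "I = {}")
    case True thus ?thesis by auto
  next
    case False
    then obtain a where a: "a \<in> I" by auto
    define N where "N = {j\<in>I-{a}. R a j}"
    define I' where "I' = I - insert a N"
    have sub: "I' \<subset> I" using a unfolding I'_def by auto
    have deg: "\<forall>i\<in>I'. card {j\<in>I'-{i}. R i j} \<le> D"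
    proof
      fix i assume i: "i \<in> I'"
      have "card {j\<in>I'-{i}. R i j} \<le> card {j\<in>I-{i}. R i j}"
        apply (rule card_mono) using psubset.hyps unfolding I'_def by auto
      also have "\<dots> \<le> D" using psubset.prems i unfolding I'_def by auto
      finally show "card {j\<in>I'-{i}. R i j} \<le> D" .
    qed
    obtain J' where J': "J' \<subseteq> I'" "\<forall>i\<in>J'. \<forall>j\<in>J'. i \<noteq> j \<longrightarrow> \<not> R i j"
        "card I' \<le> card J' * (D+1)"
      using psubset.IH[OF sub deg] by blast
    have aJ': "a \<notin> J'" using J'(1) unfolding I'_def by auto
    have indep: "\<forall>i\<in>insert a J'. \<forall>j\<in>insert a J'. i \<noteq> j \<longrightarrow> \<not> R i j"
      using J'(1,2) assms(2) unfolding I'_def N_def by blast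
    have finJ': "finite J'" using J'(1) sub psubset.hyps finite_subset by blast
    have cJ: "card (insert a J') = card J' + 1" using aJ' finJ' by simp
    have cN: "card N \<le> D" using psubset.prems a unfolding N_def by auto
    have finN: "finite N" using psubset.hyps unfolding N_def by auto
    have cN1: "card (insert a N) \<le> D + 1" using cN finN by (simp add: card_insert_if)
    have "I = I' \<union> insert a N" using a unfolding I'_def N_def by auto
    hence "card I \<le> card I' + card (insert a N)" by (metis card_Un_le)
    hence "card I \<le> card (insert a J') * (D+1)" using J'(3) cN1 cJ by (simp add: algebra_simps)
    moreover have "insert a J' \<subseteq> I" using a J'(1) sub by auto
    ultimately show ?thesis using indep by blast
  qed
qed

theorem lemma4:
  fixes \<rho> :: real and M :: "'a set" and I :: "'b set" and S :: "'b \<Rightarrow> 'a set"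
  assumes "0 < \<rho>" and "\<rho> \<le> 1"
    and "finite M" and "finite I" and "I \<noteq> {}"
    and "\<And>i. i \<in> I \<Longrightarrow> S i \<subseteq> M"
    and "\<And>i. i \<in> I \<Longrightarrow> real (card (S i)) \<ge> \<rho> * real (card M)"
  shows "(\<forall>J. J \<subseteq> I \<and> card J \<ge> k_rho \<rho> \<longrightarrow>
            (\<exists>i\<in>J. \<exists>j\<in>J. i \<noteq> j \<and> real (card (S i \<inter> S j)) \<ge> t_rho \<rho> * real (card M)))
       \<and> (\<exists>i\<in>I. real (card {j \<in> I - {i}. real (card (S i \<inter> S j)) \<ge> t_rho \<rho> * real (card M)})
              \<ge> (real (card I) - (real (k_rho \<rho>) - 1)) / (real (k_rho \<rho>) - 1))
       \<and> (real (card I) \<ge> 2 * (real (k_rho \<rho>) - 1) \<longrightarrow>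
            (\<exists>i\<in>I. real (card {j \<in> I - {i}. real (card (S i \<inter> S j)) \<ge> t_rho \<rho> * real (card M)})
              \<ge> real (card I) / (2 * (real (k_rho \<rho>) - 1))))"
proof -
  define n where "n = nat \<lceil>1 / \<rho>\<rceil>"
  have kn: "k_rho \<rho> = n + 1" unfolding k_rho_def n_def by simp
  have nge: "1 / \<rho> \<le> real n" unfolding n_def by (rule real_nat_ceiling_ge)
  have inv1: "1 \<le> 1 / \<rho>" using assms(1,2) by simp
  have n1: "1 \<le> real n" using nge inv1 by linarith
  have nrho: "1 \<le> real n * \<rho>" using nge assms(1) by (simp add: field_simps)
  define c where "c = t_rho \<rho> * real (card M)"
  have tdef: "t_rho \<rho> = 2 * \<rho> / (real n * (real n + 1))"
    unfolding t_rho_def Delta_def n_def[symmetric] by simp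
  have pos: "real n * (real n + 1) > 0" using n1 by simp
  have ccalc: "real (n+1) * real n * c = 2 * \<rho> * real (card M)"
  proof -
    have "real (n+1) * real n * c = (real n * (real n + 1)) * (2 * \<rho> / (real n * (real n + 1))) * real (card M)"
      unfolding c_def tdef by (simp add: algebra_simps)
    also have "\<dots> = 2 * \<rho> * real (card M)" using pos by (metis nonzero_mult_div_cancel_left order_less_irrefl times_divide_eq_right)
    finally show ?thesis .
  qed
  define adj where "adj = (\<lambda>i j. c \<le> real (card (S i \<inter> S j)))"
  have P1: "\<forall>J. J \<subseteq> I \<and> card J \<ge> n + 1 \<longrightarrow> (\<exists>i\<in>J. \<exists>j\<in>J. i \<noteq> j \<and> adj i j)"
  proof (intro allI impI)
    fix J assume J: "J \<subseteq> I \<and> n + 1 \<le> card J"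
    obtain A where A: "A \<subseteq> J" "card A = n + 1" "finite A"
      using J obtain_subset_with_card_n by metis
    show "\<exists>i\<in>J. \<exists>j\<in>J. i \<noteq> j \<and> adj i j"
    proof (rule ccontr)
      assume "\<not> ?thesis"
      hence lt: "\<forall>i\<in>A. \<forall>j\<in>A. i \<noteq> j \<longrightarrow> real (card (S i \<inter> S j)) < c"
        using A(1) unfolding adj_def by force
      have AI: "A \<subseteq> I" using A J by auto
      have finS: "\<forall>i\<in>A. finite (S i)" using AI assms(3,6) finite_subset by blast
      have b: "(\<Sum>i\<in>A. real (card (S i))) \<le> real (card (\<Union>i\<in>A. S i))
           + (\<Sum>i\<in>A. \<Sum>j\<in>A-{i}. real (card (S i \<inter> S j))) / 2"
        using bonf[OF A(3) finS] .
      have "(\<Sum>i\<in>A. \<rho> * real (card M)) \<le> (\<Sum>i\<in>A. real (card (S i)))"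
        using AI assms(7) by (intro sum_mono) auto
      hence s1: "real (n+1) * (\<rho> * real (card M)) \<le> (\<Sum>i\<in>A. real (card (S i)))"
        using A(2) by simp
      have "card (\<Union>i\<in>A. S i) \<le> card M"
        using AI assms(3,6) by (intro card_mono) auto
      hence s2: "real (card (\<Union>i\<in>A. S i)) \<le> real (card M)" by simp
      have Ane: "A \<noteq> {}" using A(2) by auto
      have "(\<Sum>i\<in>A. \<Sum>j\<in>A-{i}. real (card (S i \<inter> S j))) < (\<Sum>i\<in>A. \<Sum>j\<in>A-{i}. c)"
      proof (rule sum_strict_mono[OF A(3) Ane])
        fix i assume i: "i \<in> A"
        have "card (A - {i}) = n" using A i by simp
        moreover have "n \<noteq> 0" using n1 by auto
        ultimately have ne: "A - {i} \<noteq> {}" by (metis card.empty)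
        show "(\<Sum>j\<in>A-{i}. real (card (S i \<inter> S j))) < (\<Sum>j\<in>A-{i}. c)"
          apply (rule sum_strict_mono) using A(3) ne lt i by auto
      qed
      also have "(\<Sum>i\<in>A. \<Sum>j\<in>A-{i}. c) = real (n+1) * real n * c"
        using A(2,3) by simp
      finally have s3: "(\<Sum>i\<in>A. \<Sum>j\<in>A-{i}. real (card (S i \<inter> S j))) < 2 * \<rho> * real (card M)"
        using ccalc by simp
      have "real (n+1) * (\<rho> * real (card M)) < real (card M) + \<rho> * real (card M)"
        using b s1 s2 s3 by linarith
      hence "real n * \<rho> * real (card M) < real (card M)" by (simp add: algebra_simps)
      moreover have "real (card M) \<le> real n * \<rho> * real (card M)"
        using nrho mult_right_mono[OF nrho, of "real (card M)"] by simp
      ultimately show False by linarith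
    qed
  qed
  define deg where "deg = (\<lambda>i. card {j \<in> I - {i}. adj i j})"
  define D where "D = Max (deg ` I)"
  have "D \<in> deg ` I" unfolding D_def using assms(4,5) by (intro Max_in) auto
  then obtain i0 where i0: "i0 \<in> I" "deg i0 = D" by auto
  have symadj: "\<forall>i j. adj i j \<longrightarrow> adj j i" unfolding adj_def by (simp add: Int_commute)
  have degle: "\<forall>i\<in>I. card {j\<in>I-{i}. adj i j} \<le> D"
  proof
    fix i assume "i \<in> I"
    hence "deg i \<le> D" unfolding D_def using assms(4) by (intro Max_ge) auto
    thus "card {j\<in>I-{i}. adj i j} \<le> D" unfolding deg_def .
  qed
  obtain J where J: "J \<subseteq> I" "\<forall>i\<in>J. \<forall>j\<in>J. i \<noteq> j \<longrightarrow> \<not> adj i j" "card I \<le> card J * (D+1)"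
    using greedy[OF assms(4) symadj degle] by blast
  have cJ: "card J \<le> n"
  proof (rule ccontr)
    assume "\<not> card J \<le> n"
    hence "J \<subseteq> I \<and> n + 1 \<le> card J" using J(1) by auto
    thus False using P1 J(2) by blast
  qed
  have "card I \<le> n * (D+1)" using J(3) cJ by (meson le_trans mult_le_mono1)
  hence cI: "real (card I) \<le> real n * (real D + 1)" by (metis of_nat_le_iff of_nat_mult of_nat_Suc Suc_eq_plus1 add.commute)
  have D2: "(real (card I) - real n) / real n \<le> real D"
    using cI n1 by (simp add: field_simps)
  have setq: "{j \<in> I - {i0}. real (card (S i0 \<inter> S j)) \<ge> t_rho \<rho> * real (card M)} = {j \<in> I - {i0}. adj i0 j}"
    unfolding adj_def c_def by simp
  have R2: "real (card {j \<in> I - {i0}. real (card (S i0 \<inter> S j)) \<ge> t_rho \<rho> * real (card M)}) = real D"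
    unfolding setq using i0 unfolding deg_def by simp
  have part1: "\<forall>J. J \<subseteq> I \<and> card J \<ge> k_rho \<rho> \<longrightarrow>
            (\<exists>i\<in>J. \<exists>j\<in>J. i \<noteq> j \<and> real (card (S i \<inter> S j)) \<ge> t_rho \<rho> * real (card M))"
    using P1 unfolding kn adj_def c_def by simp
  have part2: "\<exists>i\<in>I. real (card {j \<in> I - {i}. real (card (S i \<inter> S j)) \<ge> t_rho \<rho> * real (card M)})
              \<ge> (real (card I) - (real (k_rho \<rho>) - 1)) / (real (k_rho \<rho>) - 1)"
    using i0(1) R2 D2 unfolding kn by (intro bexI[of _ i0]) auto
  have part3: "real (card I) \<ge> 2 * (real (k_rho \<rho>) - 1) \<longrightarrow>
            (\<exists>i\<in>I. real (card {j \<in> I - {i}. real (card (S i \<inter> S j)) \<ge> t_rho \<rho> * real (card M)})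
              \<ge> real (card I) / (2 * (real (k_rho \<rho>) - 1)))"
  proof
    assume h: "real (card I) \<ge> 2 * (real (k_rho \<rho>) - 1)"
    hence h': "2 * real n \<le> real (card I)" unfolding kn by simp
    have "real (card I) / (2 * real n) \<le> (real (card I) - real n) / real n"
      using h' n1 by (simp add: field_simps)
    hence "real (card I) / (2 * (real (k_rho \<rho>) - 1)) \<le> real D" using D2 unfolding kn by simp
    thus "\<exists>i\<in>I. real (card {j \<in> I - {i}. real (card (S i \<inter> S j)) \<ge> t_rho \<rho> * real (card M)})
              \<ge> real (card I) / (2 * (real (k_rho \<rho>) - 1))"
      using i0(1) R2 by (intro bexI[of _ i0]) auto
  qed
  show ?thesis using part1 part2 part3 by blast
qed

end
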